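(* Let $p\in(0,1/2)$ and $\beta<0$. Then there exist $q\in\big(\tfrac{p+1}{3},1\big)$ (any $q$ sufficiently close to $1$) and, for such $q$, a $\delta>0$, such that the map $T$ is a continuous and compact map from $\Gamma_{\beta,q,\delta}$ into $\Gamma_{\beta,q,\delta}$, with respect to the sup norm of $C([0,\delta])$.
   Context: Let $\alpha=\frac{2}{2-p}$ and $\gamma_\beta=\big[\frac{3}{|\beta|(p+1)}\big]^{1/3}$. For $q\in(\frac{p+1}{3},1)$ and $\delta>0$ let $$\Gamma_{\beta,q,\delta}=\Big\{\xi\in C([0,\delta]):\ \big|\xi(\varphi)-\gamma_\beta\varphi^{\frac{p+1}{3}}\big|\le\varphi^q\ \ \forall\varphi\in[0,\delta]\Big\}.$$ For $\xi\in\Gamma_{\beta,q,\delta}$, the function $\zeta=T\xi$ is defined on $[0,\delta]$ by $\zeta(0)=0$ and $$\zeta'(\varphi)=\frac{\alpha^2\xi(\varphi)+\varphi^p\xi(\varphi)^{-1}}{\alpha(\alpha-1)\varphi-\beta\,\xi(\varphi)},\qquad \varphi\in(0,\delta].$$ *)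

theory Defs
  imports "HOL-Analysis.Analysis"
begin

definition alpha :: "real \<Rightarrow> real" where
  "alpha p = 2 / (2 - p)"

definition gamma_b :: "real \<Rightarrow> real \<Rightarrow> real" where
  "gamma_b p \<beta> = (3 / (\<bar>\<beta>\<bar> * (p + 1))) powr (1/3)"

definition Gamma :: "real \<Rightarrow> real \<Rightarrow> real \<Rightarrow> real \<Rightarrow> (real \<Rightarrow> real) set" where
  "Gamma p \<beta> q \<delta> = {\<xi>. continuous_on {0..\<delta>} \<xi> \<and>
     (\<forall>\<phi>\<in>{0..\<delta>}. \<bar>\<xi> \<phi> - gamma_b p \<beta> * \<phi> powr ((p + 1) / 3)\<bar> \<le> \<phi> powr q)}"

definition Trhs :: "real \<Rightarrow> real \<Rightarrow> (real \<Rightarrow> real) \<Rightarrow> real \<Rightarrow> real" where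
  "Trhs p \<beta> \<xi> \<phi> = (alpha p ^ 2 * \<xi> \<phi> + \<phi> powr p * inverse (\<xi> \<phi>)) /
                      (alpha p * (alpha p - 1) * \<phi> - \<beta> * \<xi> \<phi>)"

text \<open>T xi: zeta(0) = 0 and zeta' = Trhs, i.e. zeta(phi) = integral of Trhs over [0,phi].\<close>
definition Tmap :: "real \<Rightarrow> real \<Rightarrow> (real \<Rightarrow> real) \<Rightarrow> real \<Rightarrow> real" where
  "Tmap p \<beta> \<xi> \<phi> = integral {0..\<phi>} (Trhs p \<beta> \<xi>)"

definition supdist :: "real \<Rightarrow> (real \<Rightarrow> real) \<Rightarrow> (real \<Rightarrow> real) \<Rightarrow> real" where
  "supdist \<delta> f g = (SUP \<phi>\<in>{0..\<delta>}. \<bar>f \<phi> - g \<phi>\<bar>)"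

end

theory Submission
  imports Defs "HOL-Complex_Analysis.Great_Picard"
begin

lemma R_bound:
  fixes e \<theta> l m t0 L :: real
  assumes "\<bar>e\<bar> \<le> \<theta>" "\<theta> \<le> t0" "0 \<le> l" "l \<le> t0 * \<theta>" "0 \<le> m" "m \<le> t0 * \<theta>"
    "2 < L" "t0 * (2 * L+7) \<le> L-2" "t0 \<le> 1/2"
  shows "\<bar>(l * (1+e)^2+1)/((1+e) * (1+e+m)) - 1\<bar> \<le> L * \<theta>"
proof -
  have th0: "0 \<le> \<theta>" using assms(1) by linarith
  have t00: "0 \<le> t0" using th0 assms(2) by linarith
  have v1: "1/2 \<le> 1+e" "1+e \<le> 3/2" using assms(1,2,9) by auto
  define D where "D = (1+e) * (1+e+m)"
  have D1: "D \<ge> (1-\<theta>)^2" unfolding D_def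
  proof -
    have "(1-\<theta>)^2 = (1-\<theta>) * (1-\<theta>)" by (simp add: power2_eq_square)
    also have "\<dots> \<le> (1+e) * (1+e+m)"
      by (rule mult_mono) (use assms(1,2,5,9) in auto)
    finally show "(1-\<theta>)^2 \<le> (1+e) * (1+e+m)" .
  qed
  have D2: "D \<ge> 1 - 2 * t0" using D1 assms(2) th0
  proof -
    have "(1-\<theta>)^2 = 1 - 2 * \<theta> + \<theta>^2" by (simp add: power2_eq_square algebra_simps)
    then show ?thesis using D1 assms(2) by (smt (verit) zero_le_power2)
  qed
  have Dpos: "D > 0" unfolding D_def using v1 assms(5) by (intro mult_pos_pos) auto
  have eq: "(l * (1+e)^2+1)/((1+e) * (1+e+m)) - 1 = (l * (1+e)^2 - 2 * e - e^2 - m * (1+e)) / D"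
    using Dpos unfolding D_def by (simp add: field_simps power2_eq_square)
  have N1: "\<bar>l * (1+e)^2\<bar> \<le> t0 * \<theta>*(9/4)"
  proof -
    have "(1+e)^2 \<le> 9/4" using power_mono[of "1+e" "3/2" 2] v1 by (simp add: power2_eq_square)
    then have "l * (1+e)^2 \<le> t0 * \<theta>*(9/4)" using assms(3,4) by (meson mult_mono zero_le_power2 order_trans)
    then show ?thesis using assms(3) by simp
  qed
  have N2: "\<bar>e^2\<bar> \<le> t0 * \<theta>"
  proof -
    have "\<bar>e\<bar>*\<bar>e\<bar> \<le> \<theta>*t0" by (rule mult_mono) (use assms(1,2) th0 in auto)
    then show ?thesis by (simp add: power2_eq_square abs_mult mult.commute)
  qed
  have N3: "\<bar>m * (1+e)\<bar> \<le> t0 * \<theta>*(3/2)"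
  proof -
    have "m * (1+e) \<le> (t0 * \<theta>) * (1+e)" using assms(6) v1 by (intro mult_right_mono) auto
    also have "\<dots> \<le> (t0 * \<theta>) * (3/2)" using v1 th0 t00 by (intro mult_left_mono) auto
    finally have "m * (1+e) \<le> (t0 * \<theta>) * (3/2)" .
    moreover have "0 \<le> m * (1+e)" using assms(5) v1 by simp
    ultimately show ?thesis by simp
  qed
  have N: "\<bar>l * (1+e)^2 - 2 * e - e^2 - m * (1+e)\<bar> \<le> \<theta>*(2+7 * t0)"
  proof -
    have "\<bar>l * (1+e)^2 - 2 * e - e^2 - m * (1+e)\<bar> \<le> \<bar>l * (1+e)^2\<bar> + 2 * \<bar>e\<bar> + \<bar>e^2\<bar> + \<bar>m * (1+e)\<bar>"
      by linarith
    also have "\<dots> \<le> t0 * \<theta>*(9/4) + 2 * \<theta> + t0 * \<theta> + t0 * \<theta>*(3/2)" using N1 N2 N3 assms(1) by linarith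
    also have "\<dots> \<le> \<theta>*(2+7 * t0)" using th0 t00 by (simp add: algebra_simps mult_nonneg_nonneg)
    finally show ?thesis .
  qed
  have "\<theta>*(2+7 * t0) \<le> L * \<theta>*D"
  proof -
    have "2 + 7 * t0 \<le> L * (1-2 * t0)" using assms(8) by (simp add: algebra_simps)
    also have "\<dots> \<le> L * D" using D2 assms(7) by simp
    finally show ?thesis using th0 by (metis mult.commute mult.left_commute mult_left_mono)
  qed
  then have "\<bar>l * (1+e)^2 - 2 * e - e^2 - m * (1+e)\<bar> / D \<le> L * \<theta>"
    using N Dpos by (simp add: divide_le_eq)
  moreover have "\<bar>(l * (1+e)^2 - 2 * e - e^2 - m * (1+e)) / D\<bar> = \<bar>l * (1+e)^2 - 2 * e - e^2 - m * (1+e)\<bar> / D"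
    using Dpos by (simp only: abs_divide abs_of_pos)
  ultimately show ?thesis unfolding eq by (simp only:)
qed

lemma R_lip:
  fixes e1 e2 l m :: real
  assumes "\<bar>e1\<bar> \<le> 1/2" "\<bar>e2\<bar> \<le> 1/2" "0 \<le> l" "l \<le> 1" "0 \<le> m" "m \<le> 1"
  shows "\<bar>(l * (1+e1)^2+1)/((1+e1) * (1+e1+m)) - (l * (1+e2)^2+1)/((1+e2) * (1+e2+m))\<bar> \<le> 100 * \<bar>e1-e2\<bar>"
proof -
  define v1 where "v1 = 1+e1"
  define v2 where "v2 = 1+e2"
  have b1: "1/2 \<le> v1" "v1 \<le> 3/2" "1/2 \<le> v2" "v2 \<le> 3/2" using assms(1,2) unfolding v1_def v2_def by auto
  define D where "D = v1 * v2 * (v1+m) * (v2+m)"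
  have D: "D \<ge> 1/16"
  proof -
    have "1/2 * (1/2) \<le> v1 * v2" using b1 by (intro mult_mono) auto
    moreover have "1/2 * (1/2) \<le> (v1+m) * (v2+m)" using b1 assms(5) by (intro mult_mono) auto
    ultimately have "(1/2 * (1/2)) * (1/2 * (1/2)) \<le> (v1 * v2) * ((v1+m) * (v2+m))" using b1 assms(5) by (intro mult_mono) auto
    then show ?thesis unfolding D_def by (simp add: mult.assoc)
  qed
  have eq: "(l * v1^2+1)/(v1 * (v1+m)) - (l * v2^2+1)/(v2 * (v2+m)) = (v1-v2) * (l * m * v1 * v2 - v1 - v2 - m)/D"
  proof -
    have p: "v1 > 0" "v2 > 0" "v1+m > 0" "v2+m > 0" using b1 assms(5) by auto
    have "(l * v1^2+1)/(v1 * (v1+m)) - (l * v2^2+1)/(v2 * (v2+m)) = ((l * v1^2+1) * (v2 * (v2+m)) - (l * v2^2+1) * (v1 * (v1+m)))/((v1 * (v1+m)) * (v2 * (v2+m)))"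
      using p by (intro diff_frac_eq) simp_all
    also have "(l * v1^2+1) * (v2 * (v2+m)) - (l * v2^2+1) * (v1 * (v1+m)) = (v1-v2) * (l * m * v1 * v2 - v1 - v2 - m)"
      by (simp add: power2_eq_square algebra_simps)
    also have "(v1 * (v1+m)) * (v2 * (v2+m)) = D" unfolding D_def by (simp add: algebra_simps)
    finally show ?thesis .
  qed
  have K: "\<bar>l * m * v1 * v2 - v1 - v2 - m\<bar> \<le> 25/4"
  proof -
    have "0 \<le> l * m" "l * m \<le> 1" using assms(3-6) by (auto simp: mult_le_one)
    moreover have "0 \<le> v1 * v2" "v1 * v2 \<le> 9/4" using b1 by (auto intro: mult_mono[of v1 "3/2" v2 "3/2", simplified])
    ultimately have "0 \<le> l * m * (v1 * v2)" "l * m * (v1 * v2) \<le> 9/4" by (auto intro: mult_le_one mult_mono[of "l * m" 1 "v1 * v2" "9/4", simplified])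
    then have h: "0 \<le> l * m * v1 * v2" "l * m * v1 * v2 \<le> 9/4" by (simp_all add: mult.assoc)
    show ?thesis unfolding abs_le_iff using h b1 assms(5,6) by linarith
  qed
  have "\<bar>(v1-v2) * (l * m * v1 * v2 - v1 - v2 - m)/D\<bar> = \<bar>v1-v2\<bar>*\<bar>l * m * v1 * v2 - v1 - v2 - m\<bar>/D"
    using D by (simp add: abs_mult)
  also have "\<dots> \<le> \<bar>v1-v2\<bar>*(25/4)/D" using K D by (intro divide_right_mono mult_left_mono) auto
  also have "\<dots> \<le> \<bar>v1-v2\<bar>*(25/4)/(1/16)" using D by (intro divide_left_mono) auto
  also have "\<dots> = 100 * \<bar>e1-e2\<bar>" unfolding v1_def v2_def by simp
  finally show ?thesis using eq unfolding v1_def v2_def by simp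
qed

lemma G_eq:
  fixes A B b g P x u :: real
  assumes "b > 0" "B \<ge> 0" "x > 0" "g > 0" "P > 0" "u > 0"
  shows "(A * u + P * inverse u)/(B * x + b * u) =
     P/(b * g^2) * ((A * g^2/P * (1+(u/g-1))^2+1)/((1+(u/g-1)) * (1+(u/g-1)+B * x/(b * g))))"
proof -
  have "B * x \<ge> 0" using assms by simp
  then have d: "B * x + b * u > 0" using assms by (simp add: add_nonneg_pos)
  have ug: "1+(u/g-1) = u/g" by simp
  have h1: "A * g^2/P * (u/g)^2+1 = (A * u^2+P)/P" using assms by (simp add: field_simps power2_eq_square)
  have h2: "(u/g) * (u/g+B * x/(b * g)) = u * (B * x+b * u)/(b * g^2)" using assms by (simp add: field_simps power2_eq_square)
  have h3: "(A * u + P * inverse u)/(B * x + b * u) = (A * u^2+P)/(u * (B * x+b * u))" using assms d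
    by (simp add: field_simps power2_eq_square)
  have nz: "u * (B * x+b * u) \<noteq> 0" "b * g^2 \<noteq> 0" using assms d by auto
  have gen: "P'/Z * ((Q/P')/(W/Z)) = Q/W" if "P' \<noteq> 0" "Z \<noteq> 0" "W \<noteq> 0" for P' Z Q W :: real
    using that by (simp add: field_simps)
  show ?thesis unfolding ug h1 h2 h3 using gen[of P "b * g^2" "u * (B * x+b * u)" "A * u^2+P"] nz assms by simp
qed

lemma pt_main:
  fixes A B b g P x u \<theta> t0 L :: real
  assumes "b > 0" "B \<ge> 0" "A \<ge> 0" "x > 0" "g > 0" "P > 0" "\<bar>u - g\<bar> \<le> \<theta>*g" "\<theta> \<le> t0"
    "A * g^2/P \<le> t0 * \<theta>" "B * x/(b * g) \<le> t0 * \<theta>" "2 < L" "t0 * (2 * L+7) \<le> L-2" "t0 \<le> 1/2"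
  shows "u > 0" "\<bar>(A * u + P * inverse u)/(B * x + b * u) - P/(b * g^2)\<bar> \<le> P/(b * g^2) * (L * \<theta>)"
proof -
  define e where "e = u/g - 1"
  have ue: "u = g * (1+e)" unfolding e_def using assms(5) by simp
  have "\<bar>e\<bar> = \<bar>u-g\<bar>/g" unfolding e_def using assms(5) by (simp add: field_simps abs_divide)
  then have eb: "\<bar>e\<bar> \<le> \<theta>" using assms(5,7) by (simp add: divide_le_eq mult.commute)
  then have "1 + e > 0" using assms(8,13) by linarith
  then show upos: "u > 0" using ue assms(5) by simp
  have l0: "0 \<le> A * g^2/P" using assms by simp
  have m0: "0 \<le> B * x/(b * g)" using assms by simp
  have R: "\<bar>(A * g^2/P * (1+e)^2+1)/((1+e) * (1+e+B * x/(b * g))) - 1\<bar> \<le> L * \<theta>"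
    by (rule R_bound[OF eb assms(8) l0 assms(9) m0 assms(10-13)])
  have c0: "P/(b * g^2) > 0" using assms by simp
  have "(A * u + P * inverse u)/(B * x + b * u) - P/(b * g^2) =
     P/(b * g^2) * ((A * g^2/P * (1+e)^2+1)/((1+e) * (1+e+B * x/(b * g))) - 1)"
    using G_eq[OF assms(1,2,4,5,6) upos, of A] unfolding e_def by (simp add: algebra_simps)
  then have "\<bar>(A * u + P * inverse u)/(B * x + b * u) - P/(b * g^2)\<bar> =
     P/(b * g^2) * \<bar>(A * g^2/P * (1+e)^2+1)/((1+e) * (1+e+B * x/(b * g))) - 1\<bar>"
    using c0 by (simp only: abs_mult abs_of_pos[OF c0])
  also have "\<dots> \<le> P/(b * g^2) * (L * \<theta>)" using R c0 by (intro mult_left_mono) auto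
  finally show "\<bar>(A * u + P * inverse u)/(B * x + b * u) - P/(b * g^2)\<bar> \<le> P/(b * g^2) * (L * \<theta>)" .
qed

lemma pt_lip:
  fixes A B b g P x u1 u2 \<theta> t0 :: real
  assumes "b > 0" "B \<ge> 0" "A \<ge> 0" "x > 0" "g > 0" "P > 0" "\<bar>u1 - g\<bar> \<le> \<theta>*g" "\<bar>u2 - g\<bar> \<le> \<theta>*g" "\<theta> \<le> t0"
    "A * g^2/P \<le> t0 * \<theta>" "B * x/(b * g) \<le> t0 * \<theta>" "t0 \<le> 1/2"
  shows "\<bar>(A * u1 + P * inverse u1)/(B * x + b * u1) - (A * u2 + P * inverse u2)/(B * x + b * u2)\<bar> \<le> P/(b * g^2) * (100 * \<bar>u1-u2\<bar>/g)"
proof -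
  define e1 where "e1 = u1/g - 1"
  define e2 where "e2 = u2/g - 1"
  have "\<bar>e1\<bar> = \<bar>u1-g\<bar>/g" unfolding e1_def using assms(5) by (simp add: field_simps abs_divide)
  then have eb1: "\<bar>e1\<bar> \<le> \<theta>" using assms(5,7) by (simp add: divide_le_eq mult.commute)
  have "\<bar>e2\<bar> = \<bar>u2-g\<bar>/g" unfolding e2_def using assms(5) by (simp add: field_simps abs_divide)
  then have eb2: "\<bar>e2\<bar> \<le> \<theta>" using assms(5,8) by (simp add: divide_le_eq mult.commute)
  have th: "0 \<le> \<theta>" "\<theta> \<le> 1/2" using eb1 assms(9,12) by linarith+
  have t0: "0 \<le> t0" using th assms(9) by linarith
  have tt: "t0 * \<theta> \<le> 1" using mult_mono[of t0 1 \<theta> 1] th t0 assms(9,12) by simp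
  have tg: "\<theta>*g \<le> g/2" using mult_right_mono[of \<theta> "1/2" g] th assms(5) by simp
  have u1: "u1 > 0" using assms(7) tg assms(5) unfolding abs_le_iff by linarith
  have u2: "u2 > 0" using assms(8) tg assms(5) unfolding abs_le_iff by linarith
  have l0: "0 \<le> A * g^2/P" using assms by simp
  have m0: "0 \<le> B * x/(b * g)" using assms by simp
  have R: "\<bar>(A * g^2/P * (1+e1)^2+1)/((1+e1) * (1+e1+B * x/(b * g))) - (A * g^2/P * (1+e2)^2+1)/((1+e2) * (1+e2+B * x/(b * g)))\<bar> \<le> 100 * \<bar>e1-e2\<bar>"
    by (rule R_lip) (use eb1 eb2 th l0 m0 assms(10,11) tt in auto)
  have c0: "P/(b * g^2) > 0" using assms by simp
  have "(A * u1 + P * inverse u1)/(B * x + b * u1) - (A * u2 + P * inverse u2)/(B * x + b * u2) =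
     P/(b * g^2) * ((A * g^2/P * (1+e1)^2+1)/((1+e1) * (1+e1+B * x/(b * g))) - (A * g^2/P * (1+e2)^2+1)/((1+e2) * (1+e2+B * x/(b * g))))"
    using G_eq[OF assms(1,2,4,5,6) u1, of A] G_eq[OF assms(1,2,4,5,6) u2, of A] unfolding e1_def e2_def
    by (simp add: algebra_simps)
  then have "\<bar>(A * u1 + P * inverse u1)/(B * x + b * u1) - (A * u2 + P * inverse u2)/(B * x + b * u2)\<bar> =
     P/(b * g^2) * \<bar>(A * g^2/P * (1+e1)^2+1)/((1+e1) * (1+e1+B * x/(b * g))) - (A * g^2/P * (1+e2)^2+1)/((1+e2) * (1+e2+B * x/(b * g)))\<bar>"
    using c0 by (simp only: abs_mult abs_of_pos[OF c0])
  also have "\<dots> \<le> P/(b * g^2) * (100 * \<bar>e1-e2\<bar>)" using R c0 by (intro mult_left_mono) auto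
  also have "\<bar>e1-e2\<bar> = \<bar>u1-u2\<bar>/g" unfolding e1_def e2_def using assms(5)
  proof -
    have "u1/g - u2/g = (u1-u2)/g" by (simp add: diff_divide_distrib)
    then show "\<bar>u1/g - 1 - (u2/g - 1)\<bar> = \<bar>u1-u2\<bar>/g" using assms(5) by (simp add: abs_divide)
  qed
  finally show ?thesis by simp
qed

lemma pow_int:
  fixes a k \<phi> :: real
  assumes "a > -1" "\<phi> \<ge> 0"
  shows "((\<lambda>t. k * t powr a) has_integral (k * (\<phi> powr (a+1)/(a+1)))) {0..\<phi>}"
  by (rule has_integral_mult_right[OF has_integral_powr_from_0[OF assms]])

lemma integrable_dom:
  fixes f h :: "real \<Rightarrow> real"
  assumes "continuous_on {0<..\<phi>} f" "\<And>t. t\<in>{0..\<phi>} \<Longrightarrow> \<bar>f t\<bar> \<le> h t" "h integrable_on {0..\<phi>}"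
  shows "f integrable_on {0..\<phi>}"
proof -
  have n1: "negligible {x \<in> {0..\<phi>} - {0<..\<phi>}. g x \<noteq> 0}" for g :: "real \<Rightarrow> real"
    by (rule negligible_subset[of "{0}"]) auto
  have n2: "negligible {x \<in> {0<..\<phi>} - {0..\<phi>}. g x \<noteq> 0}" for g :: "real \<Rightarrow> real"
    by (rule negligible_subset[of "{}"]) auto
  have hi: "h integrable_on {0<..\<phi>}" by (rule integrable_spike_set[OF assms(3) n1 n2])
  have S: "{0<..\<phi>} \<in> sets lebesgue" by simp
  have fm: "f \<in> borel_measurable (lebesgue_on {0<..\<phi>})"
    by (rule continuous_imp_measurable_on_sets_lebesgue[OF assms(1) S])
  have "f integrable_on {0<..\<phi>}"
    by (rule measurable_bounded_by_integrable_imp_integrable_real[OF fm hi _ S]) (use assms(2) in auto)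
  then show ?thesis by (rule integrable_spike_set[OF _ n2 n1])
qed

lemma powr_facts:
  fixes x p q s :: real
  assumes "x > 0" "p = 3 * s - 1"
  shows "x powr p = (x powr s)^2/(x powr (1-q) * x powr (q-s))"
    "x powr q = x powr (q-s) * x powr s"
    "x = x powr (1-q) * x powr (q-s) * x powr s"
    "x powr (s-1) = 1/(x powr (1-q) * x powr (q-s))"
    "x powr (q-1) = 1/x powr (1-q)"
proof -
  have e1: "x powr (1-q) * x powr (q-s) = x powr (1-s)" using assms by (simp add: powr_add[symmetric])
  have sq: "(x powr s)^2 = x powr (2 * s)" using assms by (simp add: power2_eq_square powr_add[symmetric])
  show "x powr p = (x powr s)^2/(x powr (1-q) * x powr (q-s))"
    unfolding e1 sq using assms by (simp add: powr_diff[symmetric])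
  show "x powr q = x powr (q-s) * x powr s" using assms by (simp add: powr_add[symmetric])
  show "x = x powr (1-q) * x powr (q-s) * x powr s" unfolding e1 using assms by (simp add: powr_add[symmetric])
  show "x powr (s-1) = 1/(x powr (1-q) * x powr (q-s))" unfolding e1 using assms
    by (simp add: powr_minus_divide[symmetric] powr_minus)
  show "x powr (q-1) = 1/x powr (1-q)" using assms by (simp add: powr_minus_divide[symmetric] powr_minus)
qed

theorem lemma7p1:
  fixes p \<beta> :: real
  assumes "0 < p" "p < 1/2" "\<beta> < 0"
  shows "\<exists>q0. (p + 1) / 3 < q0 \<and> q0 < 1 \<and>
    (\<forall>q. q0 < q \<and> q < 1 \<longrightarrow>
      (\<exists>\<delta>>0.
         \<comment> \<open>T is well defined: zeta' is integrable, zeta(0)=0, zeta' = Trhs on (0,delta]\<close>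
         (\<forall>\<xi>\<in>Gamma p \<beta> q \<delta>. (\<forall>\<phi>\<in>{0..\<delta>}. Trhs p \<beta> \<xi> integrable_on {0..\<phi>}) \<and>
             (\<forall>\<phi>\<in>{0<..\<delta>}. (Tmap p \<beta> \<xi> has_real_derivative Trhs p \<beta> \<xi> \<phi>)
                                  (at \<phi> within {0..\<delta>}))) \<and>
         \<comment> \<open>T maps Gamma into Gamma\<close>
         (\<forall>\<xi>\<in>Gamma p \<beta> q \<delta>. Tmap p \<beta> \<xi> \<in> Gamma p \<beta> q \<delta>) \<and>
         \<comment> \<open>T is continuous w.r.t. the sup norm on [0,delta]\<close>
         (\<forall>\<xi>\<in>Gamma p \<beta> q \<delta>. \<forall>e>0. \<exists>d>0. \<forall>\<eta>\<in>Gamma p \<beta> q \<delta>.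
             supdist \<delta> \<xi> \<eta> < d \<longrightarrow>
             supdist \<delta> (Tmap p \<beta> \<xi>) (Tmap p \<beta> \<eta>) < e) \<and>
         \<comment> \<open>T is compact: T(Gamma) is relatively compact in C([0,delta])\<close>
         (\<forall>X :: nat \<Rightarrow> real \<Rightarrow> real. (\<forall>n. X n \<in> Gamma p \<beta> q \<delta>) \<longrightarrow>
             (\<exists>r g. strict_mono r \<and> continuous_on {0..\<delta>} g \<and>
                uniform_limit {0..\<delta>} (\<lambda>n. Tmap p \<beta> (X (r n))) g sequentially))))"
proof -
  define s where "s = (p+1)/3"
  define b where "b = - \<beta>"
  define \<gamma> where "\<gamma> = gamma_b p \<beta>"
  define A where "A = alpha p ^ 2"
  define B where "B = alpha p * (alpha p - 1)"
  define c where "c = 1/(b*\<gamma>^2)"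
  have s1: "1/3 < s" "s < 1/2" using assms unfolding s_def by auto
  have p3: "p = 3 * s - 1" unfolding s_def by (simp add: field_simps)
  have b0: "b > 0" using assms(3) unfolding b_def by simp
  have X: "3/(\<bar>\<beta>\<bar>*(p+1)) = 1/(b * s)" unfolding b_def s_def using assms(3) by (simp add: field_simps)
  have g0: "\<gamma> > 0" unfolding \<gamma>_def gamma_b_def X using b0 s1 by simp
  have g3: "b * \<gamma>^3 * s = 1"
  proof -
    have "\<gamma>^3 = (1/(b * s)) powr (real 3 * (1/3))"
      unfolding \<gamma>_def gamma_b_def X by (rule powr_power) (use b0 s1 in auto)
    then have "\<gamma>^3 = 1/(b * s)" using b0 s1 by simp
    then show ?thesis using b0 s1 by simp
  qed
  have al: "alpha p \<ge> 1" unfolding alpha_def using assms by (simp add: field_simps)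
  have A0: "A \<ge> 0" unfolding A_def by simp
  have B0: "B \<ge> 0" unfolding B_def using al by simp
  have c0: "c > 0" unfolding c_def using b0 g0 by simp
  have Trhs_eq: "\<And>\<xi> x. Trhs p \<beta> \<xi> x = (A * \<xi> x + x powr p * inverse (\<xi> x))/(B * x + b * \<xi> x)"
    unfolding Trhs_def A_def B_def b_def by simp
  show ?thesis
  proof (rule exI[of _ "1/2 + s"], intro conjI allI impI)
    show "(p + 1) / 3 < 1/2 + s" unfolding s_def by simp
    show "1/2 + s < 1" using s1 by simp
    fix q assume q: "1/2 + s < q \<and> q < 1"
    define L where "L = q / s"
    have L2: "2 < L" unfolding L_def using q s1 by (simp add: field_simps)
    define t0 where "t0 = min (1/2) ((L-2)/(2*L+7))"
    have t0: "0 < t0" "t0 \<le> 1/2" "t0*(2*L+7) \<le> L-2"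
    proof -
      show "0 < t0" unfolding t0_def using L2 by simp
      show "t0 \<le> 1/2" unfolding t0_def by (rule min.cobounded1)
      have "t0 \<le> (L-2)/(2*L+7)" unfolding t0_def by (rule min.cobounded2)
      then show "t0*(2*L+7) \<le> L-2" using L2 by (simp add: le_divide_eq)
    qed
    define K where "K = A*\<gamma>^3 + B/b + 1"
    have K1: "0 \<le> A*\<gamma>^3" "0 \<le> B/b" using A0 B0 b0 g0 by auto
    have K0: "K > 0" "A*\<gamma>^3 \<le> K" "B/b \<le> K" unfolding K_def using K1 by linarith+
    define \<delta> where "\<delta> = min 1 (min ((t0*\<gamma>) powr (1/(q-s))) ((t0/K) powr (1/(1-q))))"
    have d0: "0 < \<delta>" "\<delta> \<le> 1" unfolding \<delta>_def using t0 g0 K0 by auto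
    have small: "x powr (q-s) \<le> t0*\<gamma>" "K * x powr (1-q) \<le> t0" if "0 < x" "x \<le> \<delta>" for x
    proof -
      have "x powr (q-s) \<le> \<delta> powr (q-s)" by (rule powr_mono2) (use q s1 that in auto)
      also have "\<dots> \<le> ((t0*\<gamma>) powr (1/(q-s))) powr (q-s)" by (rule powr_mono2) (use q s1 d0 in \<open>auto simp: \<delta>_def\<close>)
      also have "\<dots> = t0*\<gamma>" using q s1 t0 g0 by (simp add: powr_powr)
      finally show "x powr (q-s) \<le> t0*\<gamma>" .
      have "x powr (1-q) \<le> \<delta> powr (1-q)" by (rule powr_mono2) (use q s1 that in auto)
      also have "\<dots> \<le> ((t0/K) powr (1/(1-q))) powr (1-q)" by (rule powr_mono2) (use q s1 d0 in \<open>auto simp: \<delta>_def\<close>)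
      also have "\<dots> = t0/K" using q s1 t0 K0 by (simp add: powr_powr)
      finally show "K * x powr (1-q) \<le> t0" using K0 by (simp add: le_divide_eq mult.commute)
    qed
    have pt: "\<xi> x > 0 \<and> \<bar>Trhs p \<beta> \<xi> x - c * x powr (s-1)\<bar> \<le> q * x powr (q-1)"
      if \<xi>: "\<xi> \<in> Gamma p \<beta> q \<delta>" and x: "0 < x" "x \<le> \<delta>" for \<xi> x
    proof -
      define y where "y = x powr (1-q)"
      define z where "z = x powr (q-s)"
      define w where "w = x powr s"
      have yzw: "y > 0" "z > 0" "w > 0" using x by (auto simp: y_def z_def w_def)
      note pf = powr_facts[OF x(1) p3, of q, folded y_def z_def w_def]
      have Gb: "\<bar>\<xi> x - \<gamma> * w\<bar> \<le> z/\<gamma> * (\<gamma>*w)"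
      proof -
        have "\<bar>\<xi> x - \<gamma> * x powr ((p+1)/3)\<bar> \<le> x powr q" using \<xi> x unfolding Gamma_def \<gamma>_def by auto
        then show ?thesis unfolding pf(2) using g0 by (simp add: s_def[symmetric] w_def[symmetric])
      qed
      have sm: "z \<le> t0*\<gamma>" "K*y \<le> t0" using small[OF x] unfolding y_def z_def by auto
      have c1: "z/\<gamma> \<le> t0" using sm g0 by (simp add: divide_le_eq mult.commute)
      have c2: "A*(\<gamma>*w)^2/(x powr p) \<le> t0*(z/\<gamma>)"
      proof -
        have "A*(\<gamma>*w)^2/(x powr p) = (A*\<gamma>^3*y) * (z/\<gamma>)" unfolding pf(1) using yzw g0
          by (simp add: field_simps power2_eq_square power3_eq_cube)
        also have "\<dots> \<le> t0*(z/\<gamma>)"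
        proof (rule mult_right_mono)
          have "A*\<gamma>^3*y \<le> K*y" using K0 yzw by (intro mult_right_mono) auto
          then show "A*\<gamma>^3*y \<le> t0" using sm by linarith
        qed (use yzw g0 in auto)
        finally show ?thesis .
      qed
      have c3: "B*x/(b*(\<gamma>*w)) \<le> t0*(z/\<gamma>)"
      proof -
        have "B*x/(b*(\<gamma>*w)) = (B/b*y) * (z/\<gamma>)" using yzw g0 b0
          by (subst pf(3)) (simp add: field_simps)
        also have "\<dots> \<le> t0*(z/\<gamma>)"
        proof (rule mult_right_mono)
          have "B/b*y \<le> K*y" using K0 yzw by (intro mult_right_mono) auto
          then show "B/b*y \<le> t0" using sm by linarith
        qed (use yzw g0 in auto)
        finally show ?thesis .
      qed
      have gw: "\<gamma>*w > 0" using g0 yzw by simp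
      have Pp: "x powr p > 0" using x by simp
      note M = pt_main[OF b0 B0 A0 x(1) gw Pp Gb c1 c2 c3 L2 t0(3) t0(2)]
      have e1: "x powr p/(b*(\<gamma>*w)^2) = c * x powr (s-1)"
        unfolding pf(1) pf(4) c_def using yzw g0 b0 by (simp add: field_simps power2_eq_square)
      have e2: "x powr p/(b*(\<gamma>*w)^2) * (L*(z/\<gamma>)) = q * x powr (q-1)"
      proof -
        have g3': "b*\<gamma>^2 * s * \<gamma> = 1" using g3 by (simp add: power2_eq_square power3_eq_cube mult_ac)
        have "x powr p/(b*(\<gamma>*w)^2) * (L*(z/\<gamma>)) = q/y * (1/(b*\<gamma>^2 * s * \<gamma>))"
          unfolding pf(1) L_def using yzw g0 b0 s1 by (simp add: field_simps power2_eq_square)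
        also have "\<dots> = q * x powr (q-1)" unfolding g3' pf(5) by simp
        finally show ?thesis .
      qed
      have "\<bar>Trhs p \<beta> \<xi> x - c * x powr (s-1)\<bar> \<le> q * x powr (q-1)"
        using M(2) unfolding e2 unfolding e1 Trhs_eq .
      then show ?thesis using M(1) by simp
    qed
    have lip: "\<bar>Trhs p \<beta> \<xi> x - Trhs p \<beta> \<eta> x\<bar> \<le> (100*c/\<gamma>) * \<bar>\<xi> x - \<eta> x\<bar> / x"
      if \<xi>: "\<xi> \<in> Gamma p \<beta> q \<delta>" and \<eta>: "\<eta> \<in> Gamma p \<beta> q \<delta>" and x: "0 < x" "x \<le> \<delta>" for \<xi> \<eta> x
    proof -
      define y where "y = x powr (1-q)"
      define z where "z = x powr (q-s)"
      define w where "w = x powr s"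
      have yzw: "y > 0" "z > 0" "w > 0" using x by (auto simp: y_def z_def w_def)
      note pf = powr_facts[OF x(1) p3, of q, folded y_def z_def w_def]
      have Gb1: "\<bar>\<xi> x - \<gamma> * w\<bar> \<le> z/\<gamma> * (\<gamma>*w)"
      proof -
        have "\<bar>\<xi> x - \<gamma> * x powr ((p+1)/3)\<bar> \<le> x powr q" using \<xi> x unfolding Gamma_def \<gamma>_def by auto
        then show ?thesis unfolding pf(2) using g0 by (simp add: s_def[symmetric] w_def[symmetric])
      qed
      have Gb2: "\<bar>\<eta> x - \<gamma> * w\<bar> \<le> z/\<gamma> * (\<gamma>*w)"
      proof -
        have "\<bar>\<eta> x - \<gamma> * x powr ((p+1)/3)\<bar> \<le> x powr q" using \<eta> x unfolding Gamma_def \<gamma>_def by auto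
        then show ?thesis unfolding pf(2) using g0 by (simp add: s_def[symmetric] w_def[symmetric])
      qed
      have sm: "z \<le> t0*\<gamma>" "K*y \<le> t0" using small[OF x] unfolding y_def z_def by auto
      have c1: "z/\<gamma> \<le> t0" using sm g0 by (simp add: divide_le_eq mult.commute)
      have c2: "A*(\<gamma>*w)^2/(x powr p) \<le> t0*(z/\<gamma>)"
      proof -
        have "A*(\<gamma>*w)^2/(x powr p) = (A*\<gamma>^3*y) * (z/\<gamma>)" unfolding pf(1) using yzw g0
          by (simp add: field_simps power2_eq_square power3_eq_cube)
        also have "\<dots> \<le> t0*(z/\<gamma>)"
        proof (rule mult_right_mono)
          have "A*\<gamma>^3*y \<le> K*y" using K0 yzw by (intro mult_right_mono) auto
          then show "A*\<gamma>^3*y \<le> t0" using sm by linarith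
        qed (use yzw g0 in auto)
        finally show ?thesis .
      qed
      have c3: "B*x/(b*(\<gamma>*w)) \<le> t0*(z/\<gamma>)"
      proof -
        have "B*x/(b*(\<gamma>*w)) = (B/b*y) * (z/\<gamma>)" using yzw g0 b0
          by (subst pf(3)) (simp add: field_simps)
        also have "\<dots> \<le> t0*(z/\<gamma>)"
        proof (rule mult_right_mono)
          have "B/b*y \<le> K*y" using K0 yzw by (intro mult_right_mono) auto
          then show "B/b*y \<le> t0" using sm by linarith
        qed (use yzw g0 in auto)
        finally show ?thesis .
      qed
      have gw: "\<gamma>*w > 0" using g0 yzw by simp
      have Pp: "x powr p > 0" using x by simp
      note M = pt_lip[OF b0 B0 A0 x(1) gw Pp Gb1 Gb2 c1 c2 c3 t0(2)]
      have e3: "x powr p/(b*(\<gamma>*w)^2) * (100*D/(\<gamma>*w)) = (100*c/\<gamma>) * D / x" for D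
      proof -
        have "x powr p/(b*(\<gamma>*w)^2) * (100*D/(\<gamma>*w)) = (100*c/\<gamma>) * D / (y*z*w)"
          unfolding pf(1) c_def using yzw g0 b0 by (simp add: field_simps power2_eq_square)
        also have "\<dots> = (100*c/\<gamma>) * D / x" by (simp only: pf(3)[symmetric])
        finally show ?thesis .
      qed
      show ?thesis using M unfolding e3 Trhs_eq .
    qed
    have xi0: "\<xi> 0 = 0" if "\<xi> \<in> Gamma p \<beta> q \<delta>" for \<xi>
    proof -
      have z: "(0::real) \<in> {0..\<delta>}" using d0 by simp
      have "\<forall>\<phi>\<in>{0..\<delta>}. \<bar>\<xi> \<phi> - gamma_b p \<beta> * \<phi> powr ((p+1)/3)\<bar> \<le> \<phi> powr q" using that unfolding Gamma_def by auto
      then have "\<bar>\<xi> 0 - gamma_b p \<beta> * 0 powr ((p+1)/3)\<bar> \<le> 0 powr q" using z by blast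
      then show ?thesis by simp
    qed
    have T0: "Trhs p \<beta> \<xi> 0 = 0" if "\<xi> \<in> Gamma p \<beta> q \<delta>" for \<xi>
      by (simp add: Trhs_def xi0[OF that])
    define h where "h = (\<lambda>t::real. c * t powr (s-1))"
    define r where "r = (\<lambda>t::real. q * t powr (q-1))"
    define M0 where "M0 = c + q"
    have q0: "q > 0" using q s1 by linarith
    have ptall: "\<bar>Trhs p \<beta> \<xi> t - h t\<bar> \<le> r t" if "\<xi> \<in> Gamma p \<beta> q \<delta>" "t \<in> {0..\<delta>}" for \<xi> t
    proof (cases "t = 0")
      case True then show ?thesis using T0[OF that(1)] by (simp add: h_def r_def)
    next
      case False then show ?thesis using pt[OF that(1)] that(2) by (simp add: h_def r_def)
    qed
    have bnd: "\<bar>Trhs p \<beta> \<xi> t\<bar> \<le> M0 * t powr (s-1)" if "\<xi> \<in> Gamma p \<beta> q \<delta>" "t \<in> {0..\<delta>}" for \<xi> t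
    proof -
      have "t powr (q-1) \<le> t powr (s-1)" by (rule powr_mono') (use that d0 q in auto)
      then have rl: "r t \<le> q * t powr (s-1)" unfolding r_def using q0 by (intro mult_left_mono) auto
      have hp: "0 \<le> h t" unfolding h_def using c0 by simp
      have "M0 * t powr (s-1) = h t + q * t powr (s-1)" unfolding M0_def h_def by (simp add: algebra_simps)
      then show ?thesis using ptall[OF that] rl hp unfolding abs_le_iff by linarith
    qed
    have cont: "continuous_on {0<..\<delta>} (Trhs p \<beta> \<xi>)" if \<xi>: "\<xi> \<in> Gamma p \<beta> q \<delta>" for \<xi>
    proof -
      have cx: "continuous_on {0<..\<delta>} \<xi>" using \<xi> unfolding Gamma_def by (auto intro: continuous_on_subset)
      have pos: "\<forall>x\<in>{0<..\<delta>}. \<xi> x \<noteq> 0" using pt[OF \<xi>] by force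
      have eqf: "Trhs p \<beta> \<xi> = (\<lambda>x. (A * \<xi> x + x powr p * inverse (\<xi> x))/(B * x + b * \<xi> x))"
        by (rule ext) (rule Trhs_eq)
      have den: "\<forall>x\<in>{0<..\<delta>}. B * x + b * \<xi> x \<noteq> 0"
      proof
        fix x assume x: "x \<in> {0<..\<delta>}"
        then have "\<xi> x > 0" using pt[OF \<xi>] by force
        then have "b * \<xi> x > 0" using b0 by simp
        moreover have "B * x \<ge> 0" using B0 x by simp
        ultimately show "B * x + b * \<xi> x \<noteq> 0" by linarith
      qed
      show ?thesis unfolding eqf using cx pos den by (intro continuous_intros) auto
    qed
    have hint: "(h has_integral (\<gamma> * \<phi> powr s)) {0..\<phi>}" if "0 \<le> \<phi>" for \<phi>
    proof -
      have "(h has_integral (c * (\<phi> powr (s-1+1)/(s-1+1)))) {0..\<phi>}" unfolding h_def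
        by (rule pow_int) (use s1 that in auto)
      moreover have "c / s = \<gamma>" unfolding c_def using g3 b0 g0 s1
        by (simp add: field_simps power2_eq_square power3_eq_cube)
      moreover have "c * (\<phi> powr (s-1+1)/(s-1+1)) = c / s * \<phi> powr s" by simp
      ultimately show ?thesis by simp
    qed
    have rint: "(r has_integral (\<phi> powr q)) {0..\<phi>}" if "0 \<le> \<phi>" for \<phi>
    proof -
      have "(r has_integral (q * (\<phi> powr (q-1+1)/(q-1+1)))) {0..\<phi>}" unfolding r_def
        by (rule pow_int) (use q0 that in auto)
      then show ?thesis using q0 by simp
    qed
    have hcont: "continuous_on {0<..\<phi>} h" for \<phi> unfolding h_def by (intro continuous_intros) auto
    have int1: "(\<lambda>t. Trhs p \<beta> \<xi> t - h t) integrable_on {0..\<phi>}"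
      if \<xi>: "\<xi> \<in> Gamma p \<beta> q \<delta>" and ph: "\<phi> \<in> {0..\<delta>}" for \<xi> \<phi>
    proof (rule integrable_dom[where h=r])
      show "continuous_on {0<..\<phi>} (\<lambda>t. Trhs p \<beta> \<xi> t - h t)"
      proof (intro continuous_on_diff)
        show "continuous_on {0<..\<phi>} (Trhs p \<beta> \<xi>)"
          by (rule continuous_on_subset[OF cont[OF \<xi>]]) (use ph in auto)
      qed (rule hcont)
      show "\<bar>Trhs p \<beta> \<xi> t - h t\<bar> \<le> r t" if "t \<in> {0..\<phi>}" for t using ptall[OF \<xi>] that ph by auto
      show "r integrable_on {0..\<phi>}" using rint ph by auto
    qed
    have int2: "Trhs p \<beta> \<xi> integrable_on {0..\<phi>}"
      if \<xi>: "\<xi> \<in> Gamma p \<beta> q \<delta>" and ph: "\<phi> \<in> {0..\<delta>}" for \<xi> \<phi>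
    proof -
      have "(\<lambda>t. (Trhs p \<beta> \<xi> t - h t) + h t) integrable_on {0..\<phi>}"
        using int1[OF \<xi> ph] hint ph by (intro integrable_add) auto
      then show ?thesis by simp
    qed
    have Tmap_eq: "Tmap p \<beta> \<xi> = (\<lambda>u. integral {0..u} (Trhs p \<beta> \<xi>))" for \<xi>
      by (rule ext) (simp add: Tmap_def)
    have Tbound: "\<bar>Tmap p \<beta> \<xi> \<phi> - \<gamma> * \<phi> powr s\<bar> \<le> \<phi> powr q"
      if \<xi>: "\<xi> \<in> Gamma p \<beta> q \<delta>" and ph: "\<phi> \<in> {0..\<delta>}" for \<xi> \<phi>
    proof -
      have "Tmap p \<beta> \<xi> \<phi> - \<gamma> * \<phi> powr s = integral {0..\<phi>} (\<lambda>t. Trhs p \<beta> \<xi> t - h t)"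
        unfolding Tmap_def using integral_diff[OF int2[OF \<xi> ph], of h] hint[of \<phi>] ph
        by (auto simp: integral_unique has_integral_integrable)
      also have "\<bar>\<dots>\<bar> \<le> integral {0..\<phi>} r"
        using integral_norm_bound_integral[OF int1[OF \<xi> ph], of r] rint[of \<phi>] ptall[OF \<xi>] ph
        by (auto simp: has_integral_integrable)
      also have "\<dots> = \<phi> powr q" using rint ph by (auto simp: integral_unique)
      finally show ?thesis .
    qed
    have TG: "Tmap p \<beta> \<xi> \<in> Gamma p \<beta> q \<delta>" if \<xi>: "\<xi> \<in> Gamma p \<beta> q \<delta>" for \<xi>
    proof -
      have "continuous_on {0..\<delta>} (Tmap p \<beta> \<xi>)" unfolding Tmap_eq
        by (rule indefinite_integral_continuous_1) (rule int2[OF \<xi>], use d0 in auto)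
      moreover have "\<forall>\<phi>\<in>{0..\<delta>}. \<bar>Tmap p \<beta> \<xi> \<phi> - gamma_b p \<beta> * \<phi> powr ((p + 1) / 3)\<bar> \<le> \<phi> powr q"
        using Tbound[OF \<xi>] unfolding \<gamma>_def s_def by auto
      ultimately show ?thesis unfolding Gamma_def by auto
    qed
    have deriv: "(Tmap p \<beta> \<xi> has_real_derivative Trhs p \<beta> \<xi> \<phi>) (at \<phi> within {0..\<delta>})"
      if \<xi>: "\<xi> \<in> Gamma p \<beta> q \<delta>" and ph: "\<phi> \<in> {0<..\<delta>}" for \<xi> \<phi>
    proof -
      have c1: "continuous (at \<phi> within {0<..\<delta>}) (Trhs p \<beta> \<xi>)"
        using cont[OF \<xi>] ph continuous_on_eq_continuous_within by blast
      have ateq: "at \<phi> within {0..\<delta>} = at \<phi> within {0<..\<delta>}"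
        by (rule at_within_nhd[of _ "{0<..}"]) (use ph in auto)
      have "((\<lambda>u. integral {0..u} (Trhs p \<beta> \<xi>)) has_vector_derivative Trhs p \<beta> \<xi> \<phi>) (at \<phi> within {0..\<delta>} - {})"
        by (rule integral_has_vector_derivative_continuous_at) (use int2[OF \<xi>, of \<delta>] d0 ph c1 ateq in auto)
      then show ?thesis unfolding has_real_derivative_iff_has_vector_derivative Tmap_eq by simp
    qed
    have Tcont: "\<exists>d>0. \<forall>\<eta>\<in>Gamma p \<beta> q \<delta>. supdist \<delta> \<xi> \<eta> < d \<longrightarrow>
             supdist \<delta> (Tmap p \<beta> \<xi>) (Tmap p \<beta> \<eta>) < e"
      if \<xi>: "\<xi> \<in> Gamma p \<beta> q \<delta>" and e: "e > 0" for \<xi> e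
    proof -
      define C2 where "C2 = sqrt (2*M0*(100*c/\<gamma>))"
      have M0p: "M0 > 0" unfolding M0_def using c0 q0 by simp
      have C20: "C2 \<ge> 0" unfolding C2_def using M0p c0 g0 by simp
      define d where "d = (e * s/(4*(C2+1)))^2"
      have dpos: "d > 0" unfolding d_def using e s1 C20 by simp
      have sd: "sqrt d = e * s/(4*(C2+1))" unfolding d_def using e s1 C20 by simp
      show ?thesis
      proof (intro exI[of _ d] conjI ballI impI dpos)
        fix \<eta> assume \<eta>: "\<eta> \<in> Gamma p \<beta> q \<delta>" and sup: "supdist \<delta> \<xi> \<eta> < d"
        have close: "\<bar>\<xi> t - \<eta> t\<bar> \<le> d" if t: "t \<in> {0..\<delta>}" for t
        proof -
          have cc: "continuous_on {0..\<delta>} (\<lambda>t. \<bar>\<xi> t - \<eta> t\<bar>)"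
            using \<xi> \<eta> unfolding Gamma_def by (intro continuous_intros) auto
          have "bdd_above ((\<lambda>t. \<bar>\<xi> t - \<eta> t\<bar>) ` {0..\<delta>})"
            by (rule bounded_imp_bdd_above, rule compact_imp_bounded, rule compact_continuous_image[OF cc]) simp
          then have "\<bar>\<xi> t - \<eta> t\<bar> \<le> supdist \<delta> \<xi> \<eta>" unfolding supdist_def by (rule cSUP_upper[OF t])
          then show ?thesis using sup by linarith
        qed
        have dif: "\<bar>Trhs p \<beta> \<xi> t - Trhs p \<beta> \<eta> t\<bar> \<le> C2 * sqrt d * t powr ((s-2)/2)"
          if t: "t \<in> {0..\<delta>}" for t
        proof (cases "t = 0")
          case True then show ?thesis using T0[OF \<xi>] T0[OF \<eta>] by simp
        next
          case False
          then have t0': "0 < t" "t \<le> \<delta>" using t by auto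
          define D where "D = \<bar>Trhs p \<beta> \<xi> t - Trhs p \<beta> \<eta> t\<bar>"
          have X: "D \<le> 2*M0 * t powr (s-1)"
            using bnd[OF \<xi> t] bnd[OF \<eta> t] unfolding D_def by linarith
          have "D \<le> (100*c/\<gamma>) * \<bar>\<xi> t - \<eta> t\<bar> / t" unfolding D_def by (rule lip[OF \<xi> \<eta> t0'])
          also have "\<dots> \<le> (100*c/\<gamma>) * d / t"
            using close[OF t] c0 g0 t0' by (intro divide_right_mono mult_left_mono) auto
          finally have Y: "D \<le> (100*c/\<gamma>) * d / t" .
          have D0: "0 \<le> D" unfolding D_def by simp
          have "D^2 \<le> (2*M0 * t powr (s-1)) * ((100*c/\<gamma>) * d / t)"
            unfolding power2_eq_square by (rule mult_mono[OF X Y]) (use D0 c0 q0 M0_def in auto)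
          also have "\<dots> = (2*M0*(100*c/\<gamma>)) * d * t powr (s-2)"
            using t0' by (simp add: powr_diff field_simps power2_eq_square)
          finally have "D \<le> sqrt ((2*M0*(100*c/\<gamma>)) * d * t powr (s-2))" by (rule real_le_rsqrt)
          also have "\<dots> = C2 * sqrt d * t powr ((s-2)/2)"
          proof -
            have "sqrt ((2*M0*(100*c/\<gamma>)) * d * t powr (s-2)) = sqrt (2*M0*(100*c/\<gamma>)) * sqrt d * sqrt (t powr (s-2))"
              by (simp only: real_sqrt_mult)
            moreover have "sqrt (t powr (s-2)) = t powr ((s-2)/2)" using powr_half_sqrt_powr[of t "s-2"] t0' by simp
            ultimately show ?thesis unfolding C2_def by simp
          qed
          finally show ?thesis unfolding D_def .
        qed
        have est: "\<bar>Tmap p \<beta> \<xi> \<phi> - Tmap p \<beta> \<eta> \<phi>\<bar> \<le> e/2" if ph: "\<phi> \<in> {0..\<delta>}" for \<phi>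
        proof -
          have ex: "(-1::real) < (s-2)/2" using s1 by simp
          have gi: "((\<lambda>t. (C2 * sqrt d) * t powr ((s-2)/2)) has_integral ((C2 * sqrt d) * (\<phi> powr ((s-2)/2+1)/((s-2)/2+1)))) {0..\<phi>}"
            by (rule pow_int[OF ex]) (use ph in auto)
          have "Tmap p \<beta> \<xi> \<phi> - Tmap p \<beta> \<eta> \<phi> = integral {0..\<phi>} (\<lambda>t. Trhs p \<beta> \<xi> t - Trhs p \<beta> \<eta> t)"
            unfolding Tmap_def using integral_diff[OF int2[OF \<xi> ph] int2[OF \<eta> ph]] by simp
          also have "\<bar>\<dots>\<bar> \<le> integral {0..\<phi>} (\<lambda>t. (C2 * sqrt d) * t powr ((s-2)/2))"
            using integral_norm_bound_integral[OF integrable_diff[OF int2[OF \<xi> ph] int2[OF \<eta> ph]], of "\<lambda>t. (C2 * sqrt d) * t powr ((s-2)/2)"]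
              gi dif ph by (auto simp: has_integral_integrable)
          also have "\<dots> = (C2 * sqrt d) * (\<phi> powr ((s-2)/2+1)/((s-2)/2+1))" using gi by (rule integral_unique)
          also have "\<dots> \<le> (C2 * sqrt d) * (1/(s/2))"
          proof (rule mult_left_mono)
            have e': "(s-2)/2+1 = s/2" by (simp add: field_simps)
            have "0 \<le> (s-2)/2+1" unfolding e' using s1 by simp
            then have "\<phi> powr ((s-2)/2+1) \<le> 1" by (rule powr_le1) (use ph d0 in auto)
            then show "\<phi> powr ((s-2)/2+1)/((s-2)/2+1) \<le> 1/(s/2)" unfolding e' using s1
              by (intro divide_right_mono) auto
          qed (use C20 dpos in auto)
          also have "\<dots> = e/2 * (C2/(C2+1))" unfolding sd using s1 C20 by (simp add: field_simps)
          also have "\<dots> \<le> e/2" using e C20 by (simp add: mult_le_cancel_left1 divide_le_eq)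
          finally show ?thesis .
        qed
        have "supdist \<delta> (Tmap p \<beta> \<xi>) (Tmap p \<beta> \<eta>) \<le> e/2"
          unfolding supdist_def by (rule cSUP_least) (use d0 est in auto)
        then show "supdist \<delta> (Tmap p \<beta> \<xi>) (Tmap p \<beta> \<eta>) < e" using e by linarith
      qed
    qed
    define H where "H = (\<lambda>t::real. M0 * (t powr (s-1+1)/(s-1+1)))"
    have Hint: "((\<lambda>t. M0 * t powr (s-1)) has_integral H \<phi>) {0..\<phi>}" if "0 \<le> \<phi>" for \<phi>
      unfolding H_def by (rule pow_int) (use s1 that in auto)
    have Tinc: "\<bar>Tmap p \<beta> \<xi> x - Tmap p \<beta> \<xi> y\<bar> \<le> H x - H y"
      if \<xi>: "\<xi> \<in> Gamma p \<beta> q \<delta>" and y: "0 \<le> y" "y \<le> x" "x \<le> \<delta>" for \<xi> x y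
    proof -
      have xI: "x \<in> {0..\<delta>}" using y by auto
      have fi: "Trhs p \<beta> \<xi> integrable_on {0..x}" by (rule int2[OF \<xi> xI])
      have gi: "(\<lambda>t. M0 * t powr (s-1)) integrable_on {0..x}" using Hint[of x] y by (auto simp: has_integral_integrable)
      have c1: "integral {0..y} (Trhs p \<beta> \<xi>) + integral {y..x} (Trhs p \<beta> \<xi>) = integral {0..x} (Trhs p \<beta> \<xi>)"
        by (rule Henstock_Kurzweil_Integration.integral_combine[OF y(1) y(2) fi])
      have c2: "integral {0..y} (\<lambda>t. M0 * t powr (s-1)) + integral {y..x} (\<lambda>t. M0 * t powr (s-1)) = integral {0..x} (\<lambda>t. M0 * t powr (s-1))"
        by (rule Henstock_Kurzweil_Integration.integral_combine[OF y(1) y(2) gi])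
      have fyx: "Trhs p \<beta> \<xi> integrable_on {y..x}" by (rule integrable_subinterval_real[OF fi]) (use y in auto)
      have gyx: "(\<lambda>t. M0 * t powr (s-1)) integrable_on {y..x}" by (rule integrable_subinterval_real[OF gi]) (use y in auto)
      have "norm (integral {y..x} (Trhs p \<beta> \<xi>)) \<le> integral {y..x} (\<lambda>t. M0 * t powr (s-1))"
        by (rule integral_norm_bound_integral[OF fyx gyx]) (use bnd[OF \<xi>] y in auto)
      moreover have "integral {y..x} (\<lambda>t. M0 * t powr (s-1)) = H x - H y"
        using c2 integral_unique[OF Hint[of x]] integral_unique[OF Hint[of y]] y by auto
      moreover have "Tmap p \<beta> \<xi> x - Tmap p \<beta> \<xi> y = integral {y..x} (Trhs p \<beta> \<xi>)"
        using c1 unfolding Tmap_def by auto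
      ultimately show ?thesis by simp
    qed
    have Hc: "continuous_on {0..\<delta>} H"
    proof -
      have "continuous_on {0..\<delta>} (\<lambda>t::real. t powr (s-1+1))"
        by (rule continuous_on_powr') (use s1 in \<open>auto intro: continuous_intros\<close>)
      then have "continuous_on {0..\<delta>} (\<lambda>t::real. (M0/(s-1+1)) * t powr (s-1+1))"
        by (rule continuous_on_mult_left)
      moreover have "H = (\<lambda>t::real. (M0/(s-1+1)) * t powr (s-1+1))" unfolding H_def by (rule ext) simp
      ultimately show ?thesis by simp
    qed
    have compact_part: "\<exists>r g. strict_mono r \<and> continuous_on {0..\<delta>} g \<and>
                uniform_limit {0..\<delta>} (\<lambda>n. Tmap p \<beta> (X (r n))) g sequentially"
      if X: "\<forall>n. X n \<in> Gamma p \<beta> q \<delta>" for X :: "nat \<Rightarrow> real \<Rightarrow> real"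
    proof -
      have Mb: "norm (Tmap p \<beta> (X n) x) \<le> \<gamma> + 1" if x: "x \<in> {0..\<delta>}" for n x
      proof -
        have a: "\<bar>Tmap p \<beta> (X n) x - \<gamma> * x powr s\<bar> \<le> x powr q" by (rule Tbound[OF X[rule_format] x])
        have b: "x powr s \<le> 1" by (rule powr_le1) (use s1 x d0 in auto)
        have c: "x powr q \<le> 1" by (rule powr_le1) (use q0 x d0 in auto)
        have "\<gamma> * x powr s \<le> \<gamma>" using b g0 by (simp add: mult_le_cancel_left1)
        moreover have "0 \<le> \<gamma> * x powr s" using g0 by simp
        ultimately show ?thesis using a c unfolding real_norm_def abs_le_iff by linarith
      qed
      have EQ: "\<exists>d. 0 < d \<and> (\<forall>n y. y \<in> {0..\<delta>} \<and> norm(x - y) < d \<longrightarrow> norm(Tmap p \<beta> (X n) x - Tmap p \<beta> (X n) y) < e)"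
        if x: "x \<in> {0..\<delta>}" and e: "0 < e" for x e
      proof -
        obtain d where d: "d > 0" "\<forall>x'\<in>{0..\<delta>}. dist x' x < d \<longrightarrow> dist (H x') (H x) < e"
          using Hc x e unfolding continuous_on_iff by blast
        show ?thesis
        proof (intro exI[of _ d] conjI allI impI d(1))
          fix n y assume yy: "y \<in> {0..\<delta>} \<and> norm (x - y) < d"
          then have hy: "\<bar>H y - H x\<bar> < e" using d(2) by (auto simp: dist_real_def abs_minus_commute)
          show "norm (Tmap p \<beta> (X n) x - Tmap p \<beta> (X n) y) < e"
          proof (cases "y \<le> x")
            case True
            then have "\<bar>Tmap p \<beta> (X n) x - Tmap p \<beta> (X n) y\<bar> \<le> H x - H y"
              using Tinc[OF X[rule_format]] yy x by auto
            then show ?thesis using hy by auto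
          next
            case False
            then have "\<bar>Tmap p \<beta> (X n) y - Tmap p \<beta> (X n) x\<bar> \<le> H y - H x"
              using Tinc[OF X[rule_format]] yy x by auto
            then show ?thesis using hy by (auto simp: abs_minus_commute)
          qed
        qed
      qed
      obtain g k where g: "continuous_on {0..\<delta>} g" "strict_mono (k :: nat \<Rightarrow> nat)"
        and conv: "\<And>e. 0 < e \<Longrightarrow> \<exists>N. \<forall>n x. n \<ge> N \<and> x \<in> {0..\<delta>} \<longrightarrow> norm (Tmap p \<beta> (X (k n)) x - g x) < e"
        by (rule Arzela_Ascoli[of "{0..\<delta>}" "\<lambda>n. Tmap p \<beta> (X n)" "\<gamma> + 1", OF compact_Icc Mb EQ]) auto
      show ?thesis
      proof (intro exI[of _ k] exI[of _ g] conjI g)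
        show "uniform_limit {0..\<delta>} (\<lambda>n. Tmap p \<beta> (X (k n))) g sequentially"
          unfolding uniform_limit_sequentially_iff
        proof (intro allI impI)
          fix e :: real assume "e > 0"
          then obtain N where N: "\<forall>n x. n \<ge> N \<and> x \<in> {0..\<delta>} \<longrightarrow> norm (Tmap p \<beta> (X (k n)) x - g x) < e"
            using conv by blast
          show "\<exists>N. \<forall>n\<ge>N. \<forall>x\<in>{0..\<delta>}. dist (Tmap p \<beta> (X (k n)) x) (g x) < e"
            using N by (intro exI[of _ N]) (auto simp: dist_norm)
        qed
      qed
    qed
    have P1: "\<forall>\<xi>\<in>Gamma p \<beta> q \<delta>. (\<forall>\<phi>\<in>{0..\<delta>}. Trhs p \<beta> \<xi> integrable_on {0..\<phi>}) \<and>
             (\<forall>\<phi>\<in>{0<..\<delta>}. (Tmap p \<beta> \<xi> has_real_derivative Trhs p \<beta> \<xi> \<phi>)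
                                  (at \<phi> within {0..\<delta>}))" using int2 deriv by blast
    have P2: "\<forall>\<xi>\<in>Gamma p \<beta> q \<delta>. Tmap p \<beta> \<xi> \<in> Gamma p \<beta> q \<delta>" using TG by blast
    have P3: "\<forall>\<xi>\<in>Gamma p \<beta> q \<delta>. \<forall>e>0. \<exists>d>0. \<forall>\<eta>\<in>Gamma p \<beta> q \<delta>.
             supdist \<delta> \<xi> \<eta> < d \<longrightarrow>
             supdist \<delta> (Tmap p \<beta> \<xi>) (Tmap p \<beta> \<eta>) < e" using Tcont by blast
    have P4: "\<forall>X :: nat \<Rightarrow> real \<Rightarrow> real. (\<forall>n. X n \<in> Gamma p \<beta> q \<delta>) \<longrightarrow>
             (\<exists>r g. strict_mono r \<and> continuous_on {0..\<delta>} g \<and>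
                uniform_limit {0..\<delta>} (\<lambda>n. Tmap p \<beta> (X (r n))) g sequentially)" using compact_part by blast
    show "\<exists>\<delta>>0. (\<forall>\<xi>\<in>Gamma p \<beta> q \<delta>. (\<forall>\<phi>\<in>{0..\<delta>}. Trhs p \<beta> \<xi> integrable_on {0..\<phi>}) \<and>
             (\<forall>\<phi>\<in>{0<..\<delta>}. (Tmap p \<beta> \<xi> has_real_derivative Trhs p \<beta> \<xi> \<phi>)
                                  (at \<phi> within {0..\<delta>}))) \<and>
         (\<forall>\<xi>\<in>Gamma p \<beta> q \<delta>. Tmap p \<beta> \<xi> \<in> Gamma p \<beta> q \<delta>) \<and>
         (\<forall>\<xi>\<in>Gamma p \<beta> q \<delta>. \<forall>e>0. \<exists>d>0. \<forall>\<eta>\<in>Gamma p \<beta> q \<delta>.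
             supdist \<delta> \<xi> \<eta> < d \<longrightarrow>
             supdist \<delta> (Tmap p \<beta> \<xi>) (Tmap p \<beta> \<eta>) < e) \<and>
         (\<forall>X :: nat \<Rightarrow> real \<Rightarrow> real. (\<forall>n. X n \<in> Gamma p \<beta> q \<delta>) \<longrightarrow>
             (\<exists>r g. strict_mono r \<and> continuous_on {0..\<delta>} g \<and>
                uniform_limit {0..\<delta>} (\<lambda>n. Tmap p \<beta> (X (r n))) g sequentially))"
      using d0(1) P1 P2 P3 P4 by blast
  qed
qed

end
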